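(* Let $\mathcal{I}\subseteq[K]$ be nonempty, $\theta>0$, and let $\psi,r$ be strictly convex twice differentiable functions on $\Omega\subseteq\mathbb{R}$ such that, for positive learning rates $\gamma^s_i$ ($s\in\{t,t+1\}$, $i\in\mathcal{I}$), each $\gamma^s_i\psi+\theta r$ has invertible derivative whose inverse is differentiable and convex. Let $\phi^s_{\mathcal{I}}(x)=\sum_{i\in\mathcal{I}}(\gamma^s_i\psi(x_i)+\theta r(x_i))$, $\hat\ell^t\in\mathbb{R}^K$, $c\in\mathbb{R}$, and $p,q$ with $p_i,q_i\in\Omega$ for $i\in\mathcal{I}$, $\sum_{i\in\mathcal{I}}p_i=\sum_{i\in\mathcal{I}}q_i$, and $\nabla\phi^{t+1}_{\mathcal{I}}(q)=\nabla\phi^t_{\mathcal{I}}(p)-\hat\ell^t_{\mathcal{I}}+c\cdot\mathbf{1}_{\mathcal{I}}$. Writing $A_i(u)=\gamma^{t+1}_i\psi''(u)+\theta r''(u)$ and $B_i(u)=\gamma^{t}_i\psi''(u)+\theta r''(u)$, we have $$c\le\Big(\sum_{i\in\mathcal{I}}\frac{1}{A_i(p_i)}\Big)^{-1}\sum_{i\in\mathcal{I}}\frac{(\gamma^{t+1}_i-\gamma^t_i)\psi'(p_i)+\hat\ell^t_i}{A_i(p_i)},\qquad c\ge\Big(\sum_{i\in\mathcal{I}}\frac{1}{B_i(q_i)}\Big)^{-1}\sum_{i\in\mathcal{I}}\frac{(\gamma^{t+1}_i-\gamma^t_i)\psi'(q_i)+\hat\ell^t_i}{B_i(q_i)},$$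 $$c\le\Big(\sum_{i\in\mathcal{I}}\frac{1}{B_i(p_i)}\Big)^{-1}\sum_{i\in\mathcal{I}}\frac{(\gamma^{t+1}_i-\gamma^t_i)\psi'(q_i)+\hat\ell^t_i}{B_i(p_i)},\qquad c\ge\Big(\sum_{i\in\mathcal{I}}\frac{1}{A_i(q_i)}\Big)^{-1}\sum_{i\in\mathcal{I}}\frac{(\gamma^{t+1}_i-\gamma^t_i)\psi'(p_i)+\hat\ell^t_i}{A_i(q_i)}.$$
   Context: Gradients of $\phi^s_{\mathcal{I}}$ are taken coordinatewise on $\mathcal{I}$; $v_{\mathcal{I}}$ agrees with $v$ on $\mathcal{I}$ and is $0$ elsewhere; $\mathbf{1}_{\mathcal{I}}$ is the indicator vector of $\mathcal{I}$; the gradient equation is required coordinatewise for $i\in\mathcal{I}$. *)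

theory Defs
  imports "HOL-Analysis.Analysis"
begin

definition strictly_convex_on :: "real set \<Rightarrow> (real \<Rightarrow> real) \<Rightarrow> bool" where
  "strictly_convex_on S f \<longleftrightarrow> convex S \<and>
     (\<forall>x\<in>S. \<forall>y\<in>S. \<forall>u. x \<noteq> y \<and> 0 < u \<and> u < 1 \<longrightarrow>
        f ((1 - u) * x + u * y) < (1 - u) * f x + u * f y)"

end

theory Submission
  imports Defs
begin

lemma sc_convex: "strictly_convex_on S (f::real\<Rightarrow>real) \<Longrightarrow> convex_on S f"
  unfolding strictly_convex_on_def
proof (intro convex_onI)
  fix t x y :: real assume h: "convex S \<and> (\<forall>x\<in>S. \<forall>y\<in>S. \<forall>u. x \<noteq> y \<and> 0 < u \<and> u < 1 \<longrightarrow>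
        f ((1 - u) * x + u * y) < (1 - u) * f x + u * f y)" "0 < t" "t < 1" "x \<in> S" "y \<in> S"
  show "f ((1 - t) *\<^sub>R x + t *\<^sub>R y) \<le> (1 - t) * f x + t * f y"
  proof (cases "x = y")
    case True
    then have "(1 - t) *\<^sub>R x + t *\<^sub>R y = x" by (simp add: algebra_simps)
    then show ?thesis using True by (simp add: algebra_simps)
  next
    case False
    then show ?thesis using h by (simp add: less_imp_le)
  qed
qed (simp add: strictly_convex_on_def)
lemma deriv_mono_nonneg:
  fixes f f' f'' :: "real \<Rightarrow> real"
  assumes "open S" "strictly_convex_on S f"
    and d1: "\<And>x. x \<in> S \<Longrightarrow> (f has_real_derivative f' x) (at x)"
    and d2: "\<And>x. x \<in> S \<Longrightarrow> (f' has_real_derivative f'' x) (at x)"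
    and x: "x \<in> S"
  shows "f'' x \<ge> 0"
proof (rule ccontr)
  assume "\<not> f'' x \<ge> 0"
  then have "f'' x < 0" by simp
  from DERIV_neg_dec_right[OF d2[OF x] this]
  obtain d where d: "d > 0" "\<And>h. h > 0 \<Longrightarrow> h < d \<Longrightarrow> f' x > f' (x + h)"
    by blast
  obtain e where e: "e > 0" "ball x e \<subseteq> S" using assms(1) x openE by blast
  define h where "h = min (d/2) (e/2)"
  have h12: "h > 0" "h < d" using d e unfolding h_def by auto
  have "x + h \<in> ball x e" using e d unfolding h_def by (simp add: dist_real_def abs_if)
  then have h3: "x + h \<in> S" using e by blast
  have cv: "convex_on S f" using sc_convex assms(2) by blast
  have cs: "connected S" using cv convex_on_imp_convex convex_connected by blast
  have iS: "interior S = S" using assms(1) by (simp add: interior_open)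
  have i1: "f (x+h) - f x \<ge> f' x * ((x+h) - x)"
    apply (rule convex_on_imp_above_tangent[OF cv cs])
    using x h3 iS apply simp_all
    using d1[OF x] by (rule has_field_derivative_at_within)
  have i2: "f x - f (x+h) \<ge> f' (x+h) * (x - (x+h))"
    apply (rule convex_on_imp_above_tangent[OF cv cs])
    using x h3 iS apply simp_all
    using d1[OF h3] by (rule has_field_derivative_at_within)
  have "f' x * h \<le> f' (x+h) * h" using i1 i2 by (simp add: algebra_simps)
  then have "f' x \<le> f' (x+h)" using h12 by simp
  with d(2)[OF h12] show False by simp
qed

lemma key:
  fixes H H' :: "real \<Rightarrow> real"
  assumes op: "open S"
    and dH: "\<And>x. x \<in> S \<Longrightarrow> (H has_real_derivative H' x) (at x)"
    and inj: "inj_on H S"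
    and gd: "inv_into S H differentiable_on (H ` S)"
    and gc: "convex_on (H ` S) (inv_into S H)"
    and x: "x \<in> S" and y: "y \<in> S" and nn: "H' x \<ge> 0"
  shows "H' x > 0 \<and> y - x \<ge> (H y - H x) / H' x"
proof -
  let ?g = "inv_into S H"
  have cont: "continuous_on S H"
    by (rule continuous_at_imp_continuous_on) (use dH DERIV_isCont in blast)
  have oT: "open (H ` S)" by (rule invariance_of_domain[OF cont op inj])
  have Hx: "H x \<in> H ` S" using x by blast
  have "?g differentiable (at (H x) within H ` S)" using gd Hx unfolding differentiable_on_def by blast
  then have "?g differentiable (at (H x))" using oT Hx at_within_open by metis
  then obtain D where D: "(?g has_real_derivative D) (at (H x))"
    by (auto simp: real_differentiable_def)
  have "((?g \<circ> H) has_real_derivative D * H' x) (at x)"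
    using DERIV_chain[OF D dH[OF x]] .
  moreover have "\<And>z. z \<in> S \<Longrightarrow> (?g \<circ> H) z = (\<lambda>z. z) z" using inj by simp
  ultimately have "((\<lambda>z. z) has_real_derivative D * H' x) (at x)"
    by (rule has_field_derivative_transform_within_open[OF _ op x])
  then have DH: "D * H' x = 1" using DERIV_ident by (rule DERIV_unique)
  then have pos: "H' x > 0" using nn by (cases "H' x = 0") auto
  have cs: "connected (H ` S)" using gc convex_on_imp_convex convex_connected by blast
  have iT: "interior (H ` S) = H ` S" using oT by (simp add: interior_open)
  have "?g (H y) - ?g (H x) \<ge> D * (H y - H x)"
    apply (rule convex_on_imp_above_tangent[OF gc cs])
    using Hx y iT apply simp_all
    using D by (rule has_field_derivative_at_within)
  moreover have "D = 1 / H' x" using DH pos by (simp add: field_simps)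
  moreover have "?g (H y) = y" "?g (H x) = x" using inj x y by (simp_all add: inv_into_f_f)
  ultimately show ?thesis using pos by (simp add: divide_inverse mult.commute)
qed

theorem lemma36:
  fixes K :: nat and I :: "nat set" and \<Omega> :: "real set" and \<theta> c :: real
    and \<psi> \<psi>' \<psi>'' r r' r'' :: "real \<Rightarrow> real"
    and \<gamma>t \<gamma>t1 :: "nat \<Rightarrow> real"
    and lhat p q :: "nat \<Rightarrow> real"
  assumes I_sub: "I \<subseteq> {1..K}" and I_ne: "I \<noteq> {}"
    and theta_pos: "\<theta> > 0"
    and Omega_open: "open \<Omega>"
    and psi_sc: "strictly_convex_on \<Omega> \<psi>" and r_sc: "strictly_convex_on \<Omega> r"
    and psi_d1: "\<And>x. x \<in> \<Omega> \<Longrightarrow> (\<psi> has_real_derivative \<psi>' x) (at x)"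
    and psi_d2: "\<And>x. x \<in> \<Omega> \<Longrightarrow> (\<psi>' has_real_derivative \<psi>'' x) (at x)"
    and r_d1: "\<And>x. x \<in> \<Omega> \<Longrightarrow> (r has_real_derivative r' x) (at x)"
    and r_d2: "\<And>x. x \<in> \<Omega> \<Longrightarrow> (r' has_real_derivative r'' x) (at x)"
    and gam_pos: "\<And>i. i \<in> I \<Longrightarrow> \<gamma>t i > 0 \<and> \<gamma>t1 i > 0"
    and inv_t: "\<And>i. i \<in> I \<Longrightarrow>
        inj_on (\<lambda>x. \<gamma>t i * \<psi>' x + \<theta> * r' x) \<Omega> \<and>
        inv_into \<Omega> (\<lambda>x. \<gamma>t i * \<psi>' x + \<theta> * r' x)
          differentiable_on ((\<lambda>x. \<gamma>t i * \<psi>' x + \<theta> * r' x) ` \<Omega>) \<and>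
        convex_on ((\<lambda>x. \<gamma>t i * \<psi>' x + \<theta> * r' x) ` \<Omega>)
          (inv_into \<Omega> (\<lambda>x. \<gamma>t i * \<psi>' x + \<theta> * r' x))"
    and inv_t1: "\<And>i. i \<in> I \<Longrightarrow>
        inj_on (\<lambda>x. \<gamma>t1 i * \<psi>' x + \<theta> * r' x) \<Omega> \<and>
        inv_into \<Omega> (\<lambda>x. \<gamma>t1 i * \<psi>' x + \<theta> * r' x)
          differentiable_on ((\<lambda>x. \<gamma>t1 i * \<psi>' x + \<theta> * r' x) ` \<Omega>) \<and>
        convex_on ((\<lambda>x. \<gamma>t1 i * \<psi>' x + \<theta> * r' x) ` \<Omega>)
          (inv_into \<Omega> (\<lambda>x. \<gamma>t1 i * \<psi>' x + \<theta> * r' x))"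
    and p_in: "\<And>i. i \<in> I \<Longrightarrow> p i \<in> \<Omega>" and q_in: "\<And>i. i \<in> I \<Longrightarrow> q i \<in> \<Omega>"
    and sum_eq: "(\<Sum>i\<in>I. p i) = (\<Sum>i\<in>I. q i)"
    and grad: "\<And>i. i \<in> I \<Longrightarrow>
        \<gamma>t1 i * \<psi>' (q i) + \<theta> * r' (q i) = \<gamma>t i * \<psi>' (p i) + \<theta> * r' (p i) - lhat i + c"
  shows
    "c \<le> inverse (\<Sum>i\<in>I. 1 / (\<gamma>t1 i * \<psi>'' (p i) + \<theta> * r'' (p i))) *
          (\<Sum>i\<in>I. ((\<gamma>t1 i - \<gamma>t i) * \<psi>' (p i) + lhat i) / (\<gamma>t1 i * \<psi>'' (p i) + \<theta> * r'' (p i)))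
     \<and> c \<ge> inverse (\<Sum>i\<in>I. 1 / (\<gamma>t i * \<psi>'' (q i) + \<theta> * r'' (q i))) *
          (\<Sum>i\<in>I. ((\<gamma>t1 i - \<gamma>t i) * \<psi>' (q i) + lhat i) / (\<gamma>t i * \<psi>'' (q i) + \<theta> * r'' (q i)))
     \<and> c \<le> inverse (\<Sum>i\<in>I. 1 / (\<gamma>t i * \<psi>'' (p i) + \<theta> * r'' (p i))) *
          (\<Sum>i\<in>I. ((\<gamma>t1 i - \<gamma>t i) * \<psi>' (q i) + lhat i) / (\<gamma>t i * \<psi>'' (p i) + \<theta> * r'' (p i)))
     \<and> c \<ge> inverse (\<Sum>i\<in>I. 1 / (\<gamma>t1 i * \<psi>'' (q i) + \<theta> * r'' (q i))) *
          (\<Sum>i\<in>I. ((\<gamma>t1 i - \<gamma>t i) * \<psi>' (p i) + lhat i) / (\<gamma>t1 i * \<psi>'' (q i) + \<theta> * r'' (q i)))"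
proof -
  have fin: "finite I" using I_sub finite_subset by blast
  have psi2: "\<And>x. x \<in> \<Omega> \<Longrightarrow> \<psi>'' x \<ge> 0"
    using deriv_mono_nonneg[OF Omega_open psi_sc psi_d1 psi_d2] by blast
  have r2: "\<And>x. x \<in> \<Omega> \<Longrightarrow> r'' x \<ge> 0"
    using deriv_mono_nonneg[OF Omega_open r_sc r_d1 r_d2] by blast
  have gen: "H' x > 0 \<and> y - x \<ge> (H y - H x) / H' x"
    if g: "g > 0" and H: "H = (\<lambda>x. g * \<psi>' x + \<theta> * r' x)" and H': "H' = (\<lambda>x. g * \<psi>'' x + \<theta> * r'' x)"
      and ih: "inj_on H \<Omega> \<and> inv_into \<Omega> H differentiable_on (H ` \<Omega>) \<and> convex_on (H ` \<Omega>) (inv_into \<Omega> H)"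
      and x: "x \<in> \<Omega>" and y: "y \<in> \<Omega>" for g H H' x y
  proof (rule key[OF Omega_open _ _ _ _ x y])
    show "(H has_real_derivative H' z) (at z)" if "z \<in> \<Omega>" for z
      unfolding H H' using psi_d2[OF that] r_d2[OF that] by (auto intro!: derivative_eq_intros)
    show "0 \<le> H' x" unfolding H' using psi2[OF x] r2[OF x] g theta_pos by simp
  qed (use ih in auto)
  define A where "A i = \<gamma>t1 i * \<psi>'' (p i) + \<theta> * r'' (p i)" for i
  define A2 where "A2 i = \<gamma>t1 i * \<psi>'' (q i) + \<theta> * r'' (q i)" for i
  define B where "B i = \<gamma>t i * \<psi>'' (p i) + \<theta> * r'' (p i)" for i
  define B2 where "B2 i = \<gamma>t i * \<psi>'' (q i) + \<theta> * r'' (q i)" for i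
  define d where "d i = (\<gamma>t1 i - \<gamma>t i) * \<psi>' (p i) + lhat i" for i
  define e where "e i = (\<gamma>t1 i - \<gamma>t i) * \<psi>' (q i) + lhat i" for i
  have F1: "A i > 0 \<and> q i - p i \<ge> (c - d i) / A i" if i: "i \<in> I" for i
  proof -
    have g: "A i > 0 \<and> q i - p i \<ge> ((\<gamma>t1 i * \<psi>' (q i) + \<theta> * r' (q i)) - (\<gamma>t1 i * \<psi>' (p i) + \<theta> * r' (p i))) / A i"
      using gen[OF _ refl refl inv_t1[OF i] p_in[OF i] q_in[OF i]] gam_pos[OF i] unfolding A_def by simp
    have "(\<gamma>t1 i * \<psi>' (q i) + \<theta> * r' (q i)) - (\<gamma>t1 i * \<psi>' (p i) + \<theta> * r' (p i)) = c - d i"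
      using grad[OF i] unfolding d_def by (simp add: algebra_simps)
    with g show ?thesis by simp
  qed
  have F4: "A2 i > 0 \<and> p i - q i \<ge> (d i - c) / A2 i" if i: "i \<in> I" for i
  proof -
    have g: "A2 i > 0 \<and> p i - q i \<ge> ((\<gamma>t1 i * \<psi>' (p i) + \<theta> * r' (p i)) - (\<gamma>t1 i * \<psi>' (q i) + \<theta> * r' (q i))) / A2 i"
      using gen[OF _ refl refl inv_t1[OF i] q_in[OF i] p_in[OF i]] gam_pos[OF i] unfolding A2_def by simp
    have "(\<gamma>t1 i * \<psi>' (p i) + \<theta> * r' (p i)) - (\<gamma>t1 i * \<psi>' (q i) + \<theta> * r' (q i)) = d i - c"
      using grad[OF i] unfolding d_def by (simp add: algebra_simps)
    with g show ?thesis by simp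
  qed
  have F3: "B i > 0 \<and> q i - p i \<ge> (c - e i) / B i" if i: "i \<in> I" for i
  proof -
    have g: "B i > 0 \<and> q i - p i \<ge> ((\<gamma>t i * \<psi>' (q i) + \<theta> * r' (q i)) - (\<gamma>t i * \<psi>' (p i) + \<theta> * r' (p i))) / B i"
      using gen[OF _ refl refl inv_t[OF i] p_in[OF i] q_in[OF i]] gam_pos[OF i] unfolding B_def by simp
    have "(\<gamma>t i * \<psi>' (q i) + \<theta> * r' (q i)) - (\<gamma>t i * \<psi>' (p i) + \<theta> * r' (p i)) = c - e i"
      using grad[OF i] unfolding e_def by (simp add: algebra_simps)
    with g show ?thesis by simp
  qed
  have F2: "B2 i > 0 \<and> p i - q i \<ge> (e i - c) / B2 i" if i: "i \<in> I" for i
  proof -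
    have g: "B2 i > 0 \<and> p i - q i \<ge> ((\<gamma>t i * \<psi>' (p i) + \<theta> * r' (p i)) - (\<gamma>t i * \<psi>' (q i) + \<theta> * r' (q i))) / B2 i"
      using gen[OF _ refl refl inv_t[OF i] q_in[OF i] p_in[OF i]] gam_pos[OF i] unfolding B2_def by simp
    have "(\<gamma>t i * \<psi>' (p i) + \<theta> * r' (p i)) - (\<gamma>t i * \<psi>' (q i) + \<theta> * r' (q i)) = e i - c"
      using grad[OF i] unfolding e_def by (simp add: algebra_simps)
    with g show ?thesis by simp
  qed
  have S0: "(\<Sum>i\<in>I. q i - p i) = 0" "(\<Sum>i\<in>I. p i - q i) = 0"
    using sum_eq by (simp_all add: sum_subtractf)
  have upper: "c \<le> inverse (\<Sum>i\<in>I. 1 / W i) * (\<Sum>i\<in>I. v i / W i)"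
    if W: "\<And>i. i \<in> I \<Longrightarrow> W i > 0 \<and> q i - p i \<ge> (c - v i) / W i" for W v
  proof -
    have "(\<Sum>i\<in>I. (c - v i) / W i) \<le> 0"
      using sum_mono[of I "\<lambda>i. (c - v i) / W i" "\<lambda>i. q i - p i"] W S0 by auto
    then have le: "c * (\<Sum>i\<in>I. 1 / W i) \<le> (\<Sum>i\<in>I. v i / W i)"
      by (simp add: diff_divide_distrib sum_subtractf sum_distrib_left)
    have "(\<Sum>i\<in>I. 1 / W i) > 0"
      using W fin I_ne by (intro sum_pos) auto
    with le show ?thesis by (simp add: field_simps)
  qed
  have lower: "c \<ge> inverse (\<Sum>i\<in>I. 1 / W i) * (\<Sum>i\<in>I. v i / W i)"
    if W: "\<And>i. i \<in> I \<Longrightarrow> W i > 0 \<and> p i - q i \<ge> (v i - c) / W i" for W v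
  proof -
    have "(\<Sum>i\<in>I. (v i - c) / W i) \<le> 0"
      using sum_mono[of I "\<lambda>i. (v i - c) / W i" "\<lambda>i. p i - q i"] W S0 by auto
    then have le: "c * (\<Sum>i\<in>I. 1 / W i) \<ge> (\<Sum>i\<in>I. v i / W i)"
      by (simp add: diff_divide_distrib sum_subtractf sum_distrib_left)
    have "(\<Sum>i\<in>I. 1 / W i) > 0"
      using W fin I_ne by (intro sum_pos) auto
    with le show ?thesis by (simp add: field_simps)
  qed
  show ?thesis
    using upper[of A d, OF F1] lower[of B2 e, OF F2] upper[of B e, OF F3] lower[of A2 d, OF F4]
    unfolding A_def A2_def B_def B2_def d_def e_def by blast
qed

end
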